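(* Consider the lattice Boltzmann scheme described in the context, under acoustic scaling ($\lambda>0$ fixed as $\Delta x\to 0$, with $M$, $S$, $\epsilon$ independent of $\Delta x$), and a local initialisation $w\in\mathbb{R}^{q}$. Then for every $n\in\mathbb{N}^*$ the modified equation of the $n$-th starting scheme is, for $x\in\mathbb{R}^{d}$, \begin{align*} \phi(0,x) &+ n\frac{\Delta x}{\lambda}\partial_t\phi(0,x) + O(\Delta x^2)\\ &= w_1\phi(0,x) - n\Delta x\Big(\mathcal{G}_{11}w_1 + \sum_{r=2}^{q}\mathcal{G}_{1r}w_r + \frac{1}{n}\sum_{r=2}^{q}\mathcal{G}_{1r}(\epsilon_r w_1 - w_r)\sum_{\ell=0}^{n-1}\pi_{n-\ell}(s_r)\Big)\phi(0,x) + O(\Delta x^2), \end{align*} where $\pi_\ell(X)=1-(1-X)^\ell$ for $\ell\in\mathbb{N}$. In particular, for every smooth $\phi$, $((E^n w)_1\phi(0,\cdot))(x)$ admits the expansion given by the right-hand side.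
   Context: Fix $d\ge 1$, $q\ge 1$, discrete velocities $c_1,\dots,c_q\in\mathbb{Z}^d$, an invertible moment matrix $M\in GL_q(\mathbb{R})$, a relaxation matrix $S=\mathrm{diag}(s_1,\dots,s_q)$ with $s_i\in(0,2]$ for $i\in\{2,\dots,q\}$ and $s_1\in\mathbb{R}$, and equilibrium coefficients $\epsilon\in\mathbb{R}^q$ with $\epsilon_1=1$. The collision matrix is $K=I-S(I-\epsilon e_1^T)$, with $e_1$ the first canonical vector. Let $\Delta x>0$ be the space step, $\lambda>0$ the lattice velocity and $\Delta t=\Delta x/\lambda$. For $\ell=1,\dots,d$ the shift operator $x_\ell$ acts on functions of $x\in\mathbb{R}^d$ by $(x_\ell\phi)(x)=\phi(x-\Delta x\, e_\ell)$, and for $c\in\mathbb{Z}^d$, $x^{c}=x_1^{c_1}\cdots x_d^{c_d}$. The transport matrix is $T=M\,\mathrm{diag}(x^{c_1},\dots,x^{c_q})M^{-1}$ and the evolution matrix is $E=TK$ (entries are Laurent polynomials in the shifts). The time shift is $(z\phi)(t)=\phi(t+\Delta t)$. The lattice Boltzmann scheme updates the vector of moments by $m(t+\Delta t,\cdot)=E\,m(t,\cdot)$; $m_1$ is the conserved moment. The matrix of first-order differential operators is $\mathcal{G}=M\,\mathrm{diag}(c_1\cdot\nabla_x,\dots,c_q\cdot\nabla_x)M^{-1}$ with entries $\mathcal{G}_{ij}$. Given the lattice discretisation $m_1^\circ$ of an initial datum, the initialisation is $m(0,x)=w\,m_1^\circ(x)$; it is local if $w\in\mathbb{R}^q$. The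 $n$-th starting scheme ($n\in\mathbb{N}^*$) is $m_1(n\Delta t,x)=(E^n w)_1 m_1^\circ(x)$. Its modified equation is obtained by replacing the discrete unknowns by a smooth function $\phi(t,x)$, so that the scheme reads $(z^n\phi)(0,x)=((E^nw)_1\phi(0,\cdot))(x)$, and Taylor-expanding both sides in powers of $\Delta x$ as $\Delta x\to 0$. *)

theory Defs
  imports "HOL-Analysis.Analysis" "HOL-Library.Landau_Symbols"
begin

fun Ck :: "nat \<Rightarrow> ('a::real_normed_vector \<Rightarrow> real) \<Rightarrow> bool" where
  "Ck 0 f = continuous_on UNIV f"
| "Ck (Suc k) f = (\<exists>f'. (\<forall>x. (f has_derivative f' x) (at x)) \<and> (\<forall>v. Ck k (\<lambda>x. f' x v)))"

definition smooth_fun :: "('a::real_normed_vector \<Rightarrow> real) \<Rightarrow> bool" where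
  "smooth_fun f \<longleftrightarrow> (\<forall>k. Ck k f)"

definition realv :: "int^'d \<Rightarrow> real^'d" where
  "realv c = (\<chi> a. real_of_int (c $ a))"

text \<open>Collision matrix K = I - S (I - eps e_1^T), indices 1..q.\<close>
definition Kmat :: "(nat \<Rightarrow> real) \<Rightarrow> (nat \<Rightarrow> real) \<Rightarrow> nat \<Rightarrow> nat \<Rightarrow> real" where
  "Kmat s eps i j = (if i = j then 1 else 0) - s i * ((if i = j then 1 else 0) - eps i * (if j = 1 then 1 else 0))"

text \<open>One application of the evolution matrix E = T K (T = M diag(x^{c_k}) M^{-1}) to a
vector of moment functions, for space step dx. The shift x^c acts by
(x^c f)(x) = f(x - dx c).\<close>
definition lbm_step ::
  "nat \<Rightarrow> (nat \<Rightarrow> int^'d) \<Rightarrow> (nat \<Rightarrow> nat \<Rightarrow> real) \<Rightarrow> (nat \<Rightarrow> nat \<Rightarrow> real)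
   \<Rightarrow> (nat \<Rightarrow> real) \<Rightarrow> (nat \<Rightarrow> real) \<Rightarrow> real
   \<Rightarrow> (nat \<Rightarrow> real^'d \<Rightarrow> real) \<Rightarrow> (nat \<Rightarrow> real^'d \<Rightarrow> real)" where
  "lbm_step q c M Minv s eps dx m =
     (\<lambda>i x. \<Sum>k=1..q. M i k *
        (\<Sum>j=1..q. Minv k j * (\<Sum>l=1..q. Kmat s eps j l * m l (x - dx *\<^sub>R realv (c k)))))"

definition starting_scheme ::
  "nat \<Rightarrow> (nat \<Rightarrow> int^'d) \<Rightarrow> (nat \<Rightarrow> nat \<Rightarrow> real) \<Rightarrow> (nat \<Rightarrow> nat \<Rightarrow> real)
   \<Rightarrow> (nat \<Rightarrow> real) \<Rightarrow> (nat \<Rightarrow> real) \<Rightarrow> (nat \<Rightarrow> real) \<Rightarrow> nat \<Rightarrow> real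
   \<Rightarrow> (real^'d \<Rightarrow> real) \<Rightarrow> real^'d \<Rightarrow> real" where
  "starting_scheme q c M Minv s eps w n dx phi x =
     ((lbm_step q c M Minv s eps dx ^^ n) (\<lambda>i y. w i * phi y)) 1 x"

definition Gop ::
  "nat \<Rightarrow> (nat \<Rightarrow> int^'d) \<Rightarrow> (nat \<Rightarrow> nat \<Rightarrow> real) \<Rightarrow> (nat \<Rightarrow> nat \<Rightarrow> real)
   \<Rightarrow> nat \<Rightarrow> nat \<Rightarrow> (real^'d \<Rightarrow> real) \<Rightarrow> real^'d \<Rightarrow> real" where
  "Gop q c M Minv i j f x = (\<Sum>k=1..q. M i k * Minv k j * frechet_derivative f (at x) (realv (c k)))"

definition pi_poly :: "nat \<Rightarrow> real \<Rightarrow> real" where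
  "pi_poly l X = 1 - (1 - X) ^ l"

end

theory Submission
  imports Defs
begin

lemma deriv_local_lip:
  fixes k :: "real \<Rightarrow> real"
  assumes "(k has_real_derivative D) (at 0)"
  shows "\<exists>d>0. \<exists>C. \<forall>t. \<bar>t\<bar> < d \<longrightarrow> \<bar>k t - k 0\<bar> \<le> C * \<bar>t\<bar>"
proof -
  have "((\<lambda>h. (k (0 + h) - k 0) / h) \<longlongrightarrow> D) (at 0)"
    using assms DERIV_def by blast
  then have "\<forall>\<^sub>F h in at 0. dist ((k (0 + h) - k 0) / h) D < 1"
    using tendstoD zero_less_one by blast
  then obtain d where d: "d > 0" and hd: "\<And>h. h \<noteq> 0 \<Longrightarrow> dist h 0 < d \<Longrightarrow> dist ((k (0 + h) - k 0) / h) D < 1"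
    unfolding eventually_at by blast
  have "\<bar>k t - k 0\<bar> \<le> (\<bar>D\<bar> + 1) * \<bar>t\<bar>" if "\<bar>t\<bar> < d" for t
  proof (cases "t = 0")
    case True then show ?thesis by simp
  next
    case False
    with hd[of t] that have "\<bar>(k t - k 0) / t - D\<bar> < 1" by (simp add: dist_real_def)
    then have "\<bar>(k t - k 0) / t\<bar> \<le> \<bar>D\<bar> + 1" by linarith
    then have "\<bar>k t - k 0\<bar> / \<bar>t\<bar> \<le> \<bar>D\<bar> + 1" by (simp add: abs_divide)
    then show ?thesis using False by (simp add: divide_le_eq)
  qed
  then show ?thesis using d by blast
qed

lemma taylor1:
  fixes F :: "'a::real_normed_vector \<Rightarrow> real"
  assumes d1: "\<And>y. (F has_derivative F' y) (at y)"
    and d2: "\<And>y. ((\<lambda>y. F' y v) has_derivative F2 y) (at y)"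
  shows "(\<lambda>t. F (p + t *\<^sub>R v) - (F p + t * F' p v)) \<in> O[at_right 0](\<lambda>t. t^2)"
proof -
  define h where "h t = F (p + t *\<^sub>R v)" for t
  define k where "k t = F' (p + t *\<^sub>R v) v" for t
  have lin: "\<And>y. linear (F' y)" using d1 has_derivative_linear by blast
  have lin2: "\<And>y. linear (F2 y)" using d2 has_derivative_linear by blast
  have hd: "(h has_real_derivative k t) (at t)" for t
  proof -
    have a: "((\<lambda>t. p + t *\<^sub>R v) has_derivative (\<lambda>s. s *\<^sub>R v)) (at t)"
      by (auto intro!: derivative_eq_intros)
    have "(h has_derivative (\<lambda>s. F' (p + t *\<^sub>R v) (s *\<^sub>R v))) (at t)"
      unfolding h_def using has_derivative_compose[OF a d1] by (simp add: o_def)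
    moreover have "(\<lambda>s. F' (p + t *\<^sub>R v) (s *\<^sub>R v)) = (\<lambda>s. k t * s)"
      using lin by (auto simp: k_def linear_scale)
    ultimately show ?thesis by (simp add: has_field_derivative_def)
  qed
  have kd: "(k has_real_derivative F2 p v) (at 0)"
  proof -
    have a: "((\<lambda>t. p + t *\<^sub>R v) has_derivative (\<lambda>s. s *\<^sub>R v)) (at 0)"
      by (auto intro!: derivative_eq_intros)
    have "(k has_derivative (\<lambda>s. F2 (p + 0 *\<^sub>R v) (s *\<^sub>R v))) (at 0)"
      unfolding k_def using has_derivative_compose[OF a d2] by (simp add: o_def)
    moreover have "(\<lambda>s. F2 (p + 0 *\<^sub>R v) (s *\<^sub>R v)) = (\<lambda>s. F2 p v * s)"
      using lin2 by (auto simp: linear_scale)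
    ultimately show ?thesis by (simp add: has_field_derivative_def)
  qed
  obtain d C where d: "d > 0" and dC: "\<And>t. \<bar>t\<bar> < d \<Longrightarrow> \<bar>k t - k 0\<bar> \<le> C * \<bar>t\<bar>"
    using deriv_local_lip[OF kd] by blast
  have "\<bar>h t - (h 0 + t * k 0)\<bar> \<le> C * \<bar>t ^ 2\<bar>" if t: "0 < t" "t < d" for t
  proof -
    obtain z where z: "0 < z" "z < t" "h t - h 0 = (t - 0) * k z"
      using MVT2[of 0 t h k] t hd by blast
    have "\<bar>h t - (h 0 + t * k 0)\<bar> = t * \<bar>k z - k 0\<bar>"
    proof -
      have "h t - (h 0 + t * k 0) = t * (k z - k 0)" using z by (simp add: algebra_simps)
      then show ?thesis using t by (simp add: abs_mult)
    qed
    also have "\<dots> \<le> t * (C * \<bar>z\<bar>)" using dC[of z] z t by (intro mult_left_mono) auto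
    also have "\<dots> \<le> t * (C * t)"
    proof -
      have "C \<ge> 0" proof -
        have "0 \<le> C * \<bar>z\<bar>" proof -
          have "\<bar>z\<bar> < d" using z t by simp
          then show ?thesis using dC[of z] by (meson abs_ge_zero order_trans)
        qed
        then show ?thesis using z by (simp add: zero_le_mult_iff)
      qed
      then show ?thesis using z t by (intro mult_left_mono mult_left_mono) auto
    qed
    finally show ?thesis by (simp add: power2_eq_square mult_ac)
  qed
  then have "\<forall>\<^sub>F t in at_right 0. norm (h t - (h 0 + t * k 0)) \<le> C * norm (t^2)"
    unfolding eventually_at_right[OF d] by (auto intro!: exI[of _ d] simp: d)
  then have "(\<lambda>t. h t - (h 0 + t * k 0)) \<in> O[at_right 0](\<lambda>t. t^2)" by (rule bigoI)
  then show ?thesis by (simp add: h_def k_def)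
qed


primrec aseq :: "nat \<Rightarrow> (nat\<Rightarrow>real) \<Rightarrow> (nat\<Rightarrow>real) \<Rightarrow> (nat\<Rightarrow>real) \<Rightarrow> nat \<Rightarrow> nat \<Rightarrow> real" where
  "aseq q s eps w 0 = w"
| "aseq q s eps w (Suc n) = (\<lambda>j. \<Sum>l=1..q. Kmat s eps j l * aseq q s eps w n l)"

primrec gseq :: "nat \<Rightarrow> (nat\<Rightarrow>real) \<Rightarrow> (nat\<Rightarrow>real) \<Rightarrow> (nat\<Rightarrow>real) \<Rightarrow> (nat \<Rightarrow> nat \<Rightarrow> real) \<Rightarrow> nat \<Rightarrow> nat \<Rightarrow> real" where
  "gseq q s eps w G 0 = (\<lambda>_. 0)"
| "gseq q s eps w G (Suc n) = (\<lambda>i. (\<Sum>l=1..q. Kmat s eps i l * gseq q s eps w G n l)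
        + (\<Sum>j=1..q. G i j * aseq q s eps w (Suc n) j))"

lemma bigo_cmult: "f \<in> O[F](g) \<Longrightarrow> (\<lambda>x. c * f x) \<in> O[F](g)"
  by simp

lemma sumK_lin:
  fixes K a g :: "'b \<Rightarrow> real"
  shows "(\<Sum>l\<in>A. K l * (a l * \<alpha> + g l * \<beta>)) = (\<Sum>l\<in>A. K l * a l) * \<alpha> + (\<Sum>l\<in>A. K l * g l) * \<beta>"
proof -
  have "(\<Sum>l\<in>A. K l * (a l * \<alpha> + g l * \<beta>)) = (\<Sum>l\<in>A. K l * a l * \<alpha> + K l * g l * \<beta>)"
    by (rule sum.cong) (auto simp: algebra_simps)
  then show ?thesis by (simp add: sum.distrib sum_distrib_right)
qed

lemma double_sum_lin:
  fixes M :: "'k \<Rightarrow> real"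
  shows
  "(\<Sum>k\<in>B. M k * (\<Sum>j\<in>A. N k j * (X j + Y j * Z k)))
   = (\<Sum>j\<in>A. (\<Sum>k\<in>B. M k * N k j) * X j) + (\<Sum>j\<in>A. Y j * (\<Sum>k\<in>B. M k * N k j * Z k))"
proof -
  have "(\<Sum>k\<in>B. M k * (\<Sum>j\<in>A. N k j * (X j + Y j * Z k)))
      = (\<Sum>k\<in>B. \<Sum>j\<in>A. M k * N k j * X j) + (\<Sum>k\<in>B. \<Sum>j\<in>A. Y j * (M k * N k j * Z k))"
  proof -
    have "M k * (\<Sum>j\<in>A. N k j * (X j + Y j * Z k)) = (\<Sum>j\<in>A. M k * N k j * X j + Y j * (M k * N k j * Z k))" for k
      unfolding sum_distrib_left by (rule sum.cong) (auto simp: algebra_simps)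
    then show ?thesis by (simp add: sum.distrib)
  qed
  also have "\<dots> = (\<Sum>j\<in>A. \<Sum>k\<in>B. M k * N k j * X j) + (\<Sum>j\<in>A. \<Sum>k\<in>B. Y j * (M k * N k j * Z k))"
    by (simp add: sum.swap[of _ B])
  also have "\<dots> = (\<Sum>j\<in>A. (\<Sum>k\<in>B. M k * N k j) * X j) + (\<Sum>j\<in>A. Y j * (\<Sum>k\<in>B. M k * N k j * Z k))"
    by (simp add: sum_distrib_left sum_distrib_right)
  finally show ?thesis .
qed

lemma sum_delta_ij:
  fixes q :: nat
  assumes "i \<in> {1..q}"
  shows "(\<Sum>j=1..q. (if i = j then 1 else 0) * (X j :: real)) = X i"
proof -
  have "(\<Sum>j=1..q. (if i = j then 1 else 0) * (X j :: real)) = (\<Sum>j=1..q. if j = i then X j else 0)"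
    by (rule sum.cong) auto
  also have "\<dots> = X i" using assms by (subst sum.delta) auto
  finally show ?thesis .
qed

lemma main_ind:
  fixes Phi :: "real^'d \<Rightarrow> real" and D :: "real^'d \<Rightarrow> real"
  assumes inv1: "\<forall>i\<in>{1..q}. \<forall>j\<in>{1..q}. (\<Sum>k=1..q. M i k * Minv k j) = (if i = j then 1 else 0)"
    and lin: "linear D"
    and tay: "\<And>u. (\<lambda>dx. Phi (x - dx *\<^sub>R u) - (Phi x - dx * D u)) \<in> O[at_right 0](\<lambda>dx. dx^2)"
    and G: "G = (\<lambda>i j. \<Sum>k=1..q. M i k * Minv k j * D (realv (c k)))"
  shows "\<forall>i\<in>{1..q}. \<forall>u. (\<lambda>dx. (lbm_step q c M Minv s eps dx ^^ n) (\<lambda>i y. w i * Phi y) i (x - dx *\<^sub>R u)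
     - (aseq q s eps w n i * Phi x - dx * (aseq q s eps w n i * D u + gseq q s eps w G n i)))
     \<in> O[at_right 0](\<lambda>dx. dx^2)"
proof (induction n)
  case 0
  show ?case
  proof (intro ballI allI)
    fix i u
    have "(\<lambda>dx. w i * (Phi (x - dx *\<^sub>R u) - (Phi x - dx * D u))) \<in> O[at_right 0](\<lambda>dx. dx^2)"
      using tay[of u] by (rule bigo_cmult)
    then show "(\<lambda>dx. (lbm_step q c M Minv s eps dx ^^ 0) (\<lambda>i y. w i * Phi y) i (x - dx *\<^sub>R u)
     - (aseq q s eps w 0 i * Phi x - dx * (aseq q s eps w 0 i * D u + gseq q s eps w G 0 i)))
     \<in> O[at_right 0](\<lambda>dx. dx^2)"
      by (simp add: algebra_simps)
  qed
next
  case (Suc n)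
  show ?case
  proof (intro ballI allI)
    fix i u assume i: "i \<in> {1..q}"
    define m where "m dx = (lbm_step q c M Minv s eps dx ^^ n) (\<lambda>i y. w i * Phi y)" for dx
    define a where "a = aseq q s eps w n"
    define g where "g = gseq q s eps w G n"
    define a' where "a' = aseq q s eps w (Suc n)"
    define A where "A l v dx = a l * Phi x - dx * (a l * D v + g l)" for l v dx
    define R where "R l v dx = m dx l (x - dx *\<^sub>R v) - A l v dx" for l v dx
    have RO: "\<And>l v. l \<in> {1..q} \<Longrightarrow> R l v \<in> O[at_right 0](\<lambda>dx. dx^2)"
      using Suc.IH unfolding R_def A_def m_def a_def g_def by blast
    define Rs where "Rs dx = (\<Sum>k=1..q. M i k * (\<Sum>j=1..q. Minv k j *
                 (\<Sum>l=1..q. Kmat s eps j l * R l (u + realv (c k)) dx)))" for dx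
    have RsO: "Rs \<in> O[at_right 0](\<lambda>dx. dx^2)"
      unfolding Rs_def by (intro big_sum_in_bigo bigo_cmult RO) auto
    have eq: "(lbm_step q c M Minv s eps dx ^^ Suc n) (\<lambda>i y. w i * Phi y) i (x - dx *\<^sub>R u)
     - (a' i * Phi x - dx * (a' i * D u + gseq q s eps w G (Suc n) i)) = Rs dx" for dx
    proof -
      have pt: "x - dx *\<^sub>R u - dx *\<^sub>R realv (c k) = x - dx *\<^sub>R (u + realv (c k))" for k
        by (simp add: scaleR_add_right)
      have "(lbm_step q c M Minv s eps dx ^^ Suc n) (\<lambda>i y. w i * Phi y) i (x - dx *\<^sub>R u)
        = (\<Sum>k=1..q. M i k * (\<Sum>j=1..q. Minv k j *
                 (\<Sum>l=1..q. Kmat s eps j l * (A l (u + realv (c k)) dx + R l (u + realv (c k)) dx))))"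
      proof -
        have "(lbm_step q c M Minv s eps dx ^^ Suc n) (\<lambda>i y. w i * Phi y) = lbm_step q c M Minv s eps dx (m dx)"
          by (simp add: m_def)
        moreover have "m dx l (x - dx *\<^sub>R u - dx *\<^sub>R realv (c k)) = A l (u + realv (c k)) dx + R l (u + realv (c k)) dx" for l k
          unfolding R_def pt by simp
        ultimately show ?thesis by (simp only: lbm_step_def)
      qed
      also have "\<dots> = (\<Sum>k=1..q. M i k * (\<Sum>j=1..q. Minv k j *
                 (\<Sum>l=1..q. Kmat s eps j l * A l (u + realv (c k)) dx))) + Rs dx"
        by (simp add: Rs_def distrib_left sum.distrib)
      also have "(\<Sum>k=1..q. M i k * (\<Sum>j=1..q. Minv k j *
                 (\<Sum>l=1..q. Kmat s eps j l * A l (u + realv (c k)) dx)))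
          = (\<Sum>k=1..q. M i k * (\<Sum>j=1..q. Minv k j *
               ((a' j * (Phi x - dx * D u) - dx * (\<Sum>l=1..q. Kmat s eps j l * g l))
                + (- dx * a' j) * D (realv (c k)))))"
      proof -
        have "(\<Sum>l=1..q. Kmat s eps j l * A l (u + realv (c k)) dx)
          = (\<Sum>l=1..q. Kmat s eps j l * (a l * (Phi x - dx * D u - dx * D (realv (c k))) + g l * (- dx)))"
          for j k
          by (intro sum.cong refl) (simp add: A_def linear_add[OF lin] algebra_simps)
        also have "\<dots> j k = (a' j * (Phi x - dx * D u) - dx * (\<Sum>l=1..q. Kmat s eps j l * g l))
                + (- dx * a' j) * D (realv (c k))" for j k
        proof -
          have a'j: "a' j = (\<Sum>l=1..q. Kmat s eps j l * a l)" by (simp add: a'_def a_def)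
          show ?thesis unfolding sumK_lin a'j by (simp add: algebra_simps)
        qed
        finally show ?thesis by simp
      qed
      also have "\<dots> = (\<Sum>j=1..q. (\<Sum>k=1..q. M i k * Minv k j) *
               (a' j * (Phi x - dx * D u) - dx * (\<Sum>l=1..q. Kmat s eps j l * g l)))
           + (\<Sum>j=1..q. (- dx * a' j) * G i j)"
        by (subst double_sum_lin) (simp add: G)
      also have "(\<Sum>j=1..q. (\<Sum>k=1..q. M i k * Minv k j) *
               (a' j * (Phi x - dx * D u) - dx * (\<Sum>l=1..q. Kmat s eps j l * g l)))
           = a' i * (Phi x - dx * D u) - dx * (\<Sum>l=1..q. Kmat s eps i l * g l)"
      proof -
        have "(\<Sum>j=1..q. (\<Sum>k=1..q. M i k * Minv k j) *
               (a' j * (Phi x - dx * D u) - dx * (\<Sum>l=1..q. Kmat s eps j l * g l)))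
            = (\<Sum>j=1..q. (if i = j then 1 else 0) *
               (a' j * (Phi x - dx * D u) - dx * (\<Sum>l=1..q. Kmat s eps j l * g l)))"
          using inv1 i by (intro sum.cong) auto
        then show ?thesis using sum_delta_ij[OF i] by simp
      qed
      finally have L: "(lbm_step q c M Minv s eps dx ^^ Suc n) (\<lambda>i y. w i * Phi y) i (x - dx *\<^sub>R u)
         = a' i * (Phi x - dx * D u) - dx * (\<Sum>l=1..q. Kmat s eps i l * g l) + (\<Sum>j=1..q. (- dx * a' j) * G i j) + Rs dx" .
      have hs: "(\<Sum>j=1..q. (- dx * a' j) * G i j) = - dx * (\<Sum>j=1..q. G i j * a' j)"
        by (simp add: sum_distrib_left algebra_simps)
      have gs: "gseq q s eps w G (Suc n) i = (\<Sum>l=1..q. Kmat s eps i l * g l) + (\<Sum>j=1..q. G i j * a' j)"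
        by (simp add: g_def a'_def)
      show ?thesis unfolding L hs gs by (simp add: algebra_simps)
    qed
    show "(\<lambda>dx. (lbm_step q c M Minv s eps dx ^^ Suc n) (\<lambda>i y. w i * Phi y) i (x - dx *\<^sub>R u)
     - (aseq q s eps w (Suc n) i * Phi x - dx * (aseq q s eps w (Suc n) i * D u + gseq q s eps w G (Suc n) i)))
     \<in> O[at_right 0](\<lambda>dx. dx^2)"
      using eq RsO unfolding a'_def by simp
  qed
qed


lemma row1:
  fixes q :: nat
  assumes q: "q \<ge> 1" and e: "eps 1 = 1"
  shows "(\<Sum>l=1..q. Kmat s eps 1 l * v l) = v 1"
proof -
  have "(\<Sum>l=1..q. Kmat s eps 1 l * v l) = (\<Sum>l=1..q. if l = 1 then v l else 0)"
    using e by (intro sum.cong refl) (auto simp: Kmat_def)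
  also have "\<dots> = v 1" using q by (subst sum.delta) auto
  finally show ?thesis .
qed

lemma rowr:
  fixes q :: nat
  assumes r: "r \<in> {2..q}"
  shows "(\<Sum>l=1..q. Kmat s eps r l * v l) = v r - s r * (v r - eps r * v 1)"
proof -
  have "(\<Sum>l=1..q. Kmat s eps r l * v l) = (\<Sum>l=1..q. (if l = r then (1 - s r) * v l else 0) + (if l = 1 then s r * eps r * v l else 0))"
    using r by (intro sum.cong refl) (auto simp: Kmat_def algebra_simps)
  also have "\<dots> = (1 - s r) * v r + s r * eps r * v 1"
    using r by (simp add: sum.distrib)
  finally show ?thesis by (simp add: algebra_simps)
qed

lemma a1:
  fixes q :: nat
  assumes q: "q \<ge> 1" and e: "eps 1 = 1"
  shows "aseq q s eps w n 1 = w 1"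
proof (induction n)
  case 0 then show ?case by simp
next
  case (Suc n)
  have "aseq q s eps w (Suc n) 1 = (\<Sum>l=1..q. Kmat s eps 1 l * aseq q s eps w n l)"
    by (simp only: aseq.simps)
  also have "\<dots> = aseq q s eps w n 1" by (rule row1[where q=q and eps=eps, OF q e])
  finally show ?case using Suc by simp
qed

lemma ar:
  fixes q :: nat
  assumes q: "q \<ge> 1" and e: "eps 1 = 1" and r: "r \<in> {2..q}"
  shows "aseq q s eps w n r = w r + (eps r * w 1 - w r) * pi_poly n (s r)"
proof (induction n)
  case 0
  then show ?case by (simp add: pi_poly_def)
next
  case (Suc n)
  have "aseq q s eps w (Suc n) r = (\<Sum>l=1..q. Kmat s eps r l * aseq q s eps w n l)"
    by (simp only: aseq.simps)
  also have "\<dots> = aseq q s eps w n r - s r * (aseq q s eps w n r - eps r * aseq q s eps w n 1)"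
    by (rule rowr[OF r])
  also have "\<dots> = (w r + (eps r * w 1 - w r) * pi_poly n (s r)) - s r * ((w r + (eps r * w 1 - w r) * pi_poly n (s r)) - eps r * w 1)"
    unfolding Suc a1[where q=q and eps=eps and s=s and w=w and n=n, OF q e] ..
  also have "\<dots> = w r + (eps r * w 1 - w r) * pi_poly (Suc n) (s r)"
    by (simp add: pi_poly_def algebra_simps)
  finally show ?case .
qed

lemma g1:
  fixes q :: nat
  assumes q: "q \<ge> 1" and e: "eps 1 = 1"
  shows "gseq q s eps w G n 1 = (\<Sum>b=1..n. \<Sum>j=1..q. G 1 j * aseq q s eps w b j)"
proof (induction n)
  case 0 then show ?case by simp
next
  case (Suc n)
  have "gseq q s eps w G (Suc n) 1 = (\<Sum>l=1..q. Kmat s eps 1 l * gseq q s eps w G n l) + (\<Sum>j=1..q. G 1 j * aseq q s eps w (Suc n) j)"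
    by (simp only: gseq.simps)
  also have "(\<Sum>l=1..q. Kmat s eps 1 l * gseq q s eps w G n l) = gseq q s eps w G n 1" by (rule row1[where q=q and eps=eps, OF q e])
  finally show ?case using Suc by simp
qed

lemma pi_reindex:
  assumes "n \<ge> 1"
  shows "(\<Sum>l=0..n-1. pi_poly (n - l) X) = (\<Sum>b=1..n. pi_poly b X)"
proof -
  have "{0..n-1} = {..<n}" using assms by auto
  then have "(\<Sum>l=0..n-1. pi_poly (n - l) X) = (\<Sum>l<n. (\<lambda>j. pi_poly (Suc j) X) (n - Suc l))"
    by (intro sum.cong) (auto simp: Suc_diff_Suc)
  also have "\<dots> = (\<Sum>l<n. pi_poly (Suc l) X)" by (rule sum.nat_diff_reindex)
  also have "\<dots> = (\<Sum>b=1..n. pi_poly b X)" by (simp add: sum.atLeast1_atMost_eq)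
  finally show ?thesis .
qed

lemma gclosed:
  fixes q :: nat
  assumes q: "q \<ge> 1" and e: "eps 1 = 1"
  shows "gseq q s eps w G n 1 = real n * G 1 1 * w 1 + real n * (\<Sum>r=2..q. G 1 r * w r)
          + (\<Sum>r=2..q. G 1 r * (eps r * w 1 - w r) * (\<Sum>b=1..n. pi_poly b (s r)))"
proof -
  have h1: "(\<Sum>j=1..q. G 1 j * aseq q s eps w b j)
     = G 1 1 * w 1 + ((\<Sum>r=2..q. G 1 r * w r) + (\<Sum>r=2..q. G 1 r * (eps r * w 1 - w r) * pi_poly b (s r)))" for b
  proof -
    have "(\<Sum>j=1..q. G 1 j * aseq q s eps w b j) = G 1 1 * aseq q s eps w b 1 + (\<Sum>j=2..q. G 1 j * aseq q s eps w b j)"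
      using q by (subst sum.atLeast_Suc_atMost) (auto simp: numeral_2_eq_2)
    also have "(\<Sum>j=2..q. G 1 j * aseq q s eps w b j) = (\<Sum>r=2..q. G 1 r * w r + G 1 r * (eps r * w 1 - w r) * pi_poly b (s r))"
      by (intro sum.cong refl) (simp add: ar[where q=q and eps=eps, OF q e] algebra_simps)
    finally show ?thesis using a1[where q=q and eps=eps, OF q e] by (simp add: sum.distrib)
  qed
  have "gseq q s eps w G n 1 = (\<Sum>b=1..n. G 1 1 * w 1 + ((\<Sum>r=2..q. G 1 r * w r) + (\<Sum>r=2..q. G 1 r * (eps r * w 1 - w r) * pi_poly b (s r))))"
    unfolding g1[where q=q and eps=eps, OF q e] h1 ..
  also have "\<dots> = real n * G 1 1 * w 1 + real n * (\<Sum>r=2..q. G 1 r * w r)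
          + (\<Sum>b=1..n. \<Sum>r=2..q. G 1 r * (eps r * w 1 - w r) * pi_poly b (s r))"
    by (simp add: sum.distrib)
  also have "(\<Sum>b=1..n. \<Sum>r=2..q. G 1 r * (eps r * w 1 - w r) * pi_poly b (s r))
      = (\<Sum>r=2..q. G 1 r * (eps r * w 1 - w r) * (\<Sum>b=1..n. pi_poly b (s r)))"
    by (subst sum.swap) (simp add: sum_distrib_left)
  finally show ?thesis .
qed


theorem proposition1:
  fixes q :: nat and c :: "nat \<Rightarrow> int^'d" and M Minv :: "nat \<Rightarrow> nat \<Rightarrow> real"
    and s eps w :: "nat \<Rightarrow> real" and lam :: real and n :: nat
    and phi :: "real \<Rightarrow> real^'d \<Rightarrow> real" and x :: "real^'d"
  assumes q: "q \<ge> 1"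
    and inv1: "\<forall>i\<in>{1..q}. \<forall>j\<in>{1..q}. (\<Sum>k=1..q. M i k * Minv k j) = (if i = j then 1 else 0)"
    and inv2: "\<forall>i\<in>{1..q}. \<forall>j\<in>{1..q}. (\<Sum>k=1..q. Minv i k * M k j) = (if i = j then 1 else 0)"
    and s: "\<forall>i\<in>{2..q}. 0 < s i \<and> s i \<le> 2"
    and eps1: "eps 1 = 1"
    and lam: "lam > 0"
    and n: "n \<ge> 1"
    and smooth: "smooth_fun (\<lambda>p::real \<times> (real^'d). phi (fst p) (snd p))"
  shows "(\<lambda>dx. phi (real n * dx / lam) x
              - (phi 0 x + real n * dx / lam * deriv (\<lambda>t. phi t x) 0))
           \<in> O[at_right 0](\<lambda>dx. dx ^ 2)
       \<and> (\<lambda>dx. starting_scheme q c M Minv s eps w n dx (phi 0) x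
              - (w 1 * phi 0 x
                 - real n * dx *
                   (Gop q c M Minv 1 1 (phi 0) x * w 1
                    + (\<Sum>r=2..q. Gop q c M Minv 1 r (phi 0) x * w r)
                    + 1 / real n * (\<Sum>r=2..q. Gop q c M Minv 1 r (phi 0) x * (eps r * w 1 - w r)
                                        * (\<Sum>l=0..n-1. pi_poly (n - l) (s r))))))
           \<in> O[at_right 0](\<lambda>dx. dx ^ 2)"
proof -
  define F where "F = (\<lambda>p::real \<times> (real^'d). phi (fst p) (snd p))"
  have "Ck (Suc (Suc 0)) F" using smooth unfolding smooth_fun_def F_def by blast
  then obtain F' where d1': "\<forall>y. (F has_derivative F' y) (at y)"
    and d2': "\<forall>v. Ck (Suc 0) (\<lambda>y. F' y v)"
    unfolding Ck.simps(2) by blast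
  have d1: "\<And>y. (F has_derivative F' y) (at y)" using d1' by blast
  have d2ex: "\<exists>F2. \<forall>y. ((\<lambda>y. F' y v) has_derivative F2 y) (at y)" for v
    using d2'[rule_format, of v] unfolding Ck.simps(2) by blast
  have tay: "(\<lambda>t. F (p + t *\<^sub>R v) - (F p + t * F' p v)) \<in> O[at_right 0](\<lambda>t. t^2)" for p v
  proof -
    obtain F2 where "\<forall>y. ((\<lambda>y. F' y v) has_derivative F2 y) (at y)" using d2ex by blast
    then show ?thesis using taylor1[OF d1] by blast
  qed
  define p0 where "p0 = (0::real, x)"
  have lin0: "linear (F' p0)" using d1 has_derivative_linear by blast
  have part1: "(\<lambda>dx. phi (real n * dx / lam) x
              - (phi 0 x + real n * dx / lam * deriv (\<lambda>t. phi t x) 0))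
           \<in> O[at_right 0](\<lambda>dx. dx ^ 2)"
  proof -
    have a: "((\<lambda>t. (t, x)) has_derivative (\<lambda>s. (s, 0))) (at (0::real))"
      by (auto intro!: derivative_eq_intros)
    have "((\<lambda>t. F (t, x)) has_derivative (\<lambda>s. F' p0 (s, 0))) (at 0)"
      using has_derivative_compose[OF a d1] unfolding p0_def by (simp add: o_def)
    moreover have "(\<lambda>s. F' p0 (s, 0)) = (\<lambda>s. F' p0 (1, 0) * s)"
    proof
      fix s :: real
      have "(s, 0::real^'d) = s *\<^sub>R (1, 0)" by simp
      then show "F' p0 (s, 0) = F' p0 (1, 0) * s" using linear_scale[OF lin0] by (metis mult.commute real_scaleR_def)
    qed
    ultimately have "((\<lambda>t. phi t x) has_real_derivative F' p0 (1, 0)) (at 0)"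
      by (simp add: has_field_derivative_def F_def)
    then have dv: "deriv (\<lambda>t. phi t x) 0 = F' p0 (1, 0)" by (rule DERIV_imp_deriv)
    have sc: "F' p0 (real n / lam, 0) = real n / lam * F' p0 (1, 0)"
    proof -
      have "(real n / lam, 0::real^'d) = (real n / lam) *\<^sub>R (1, 0)" by simp
      then show ?thesis using linear_scale[OF lin0, of "real n / lam" "(1, 0)"] by (metis real_scaleR_def)
    qed
    have eqf: "(\<lambda>dx. phi (real n * dx / lam) x - (phi 0 x + real n * dx / lam * deriv (\<lambda>t. phi t x) 0))
        = (\<lambda>t. F (p0 + t *\<^sub>R (real n / lam, 0)) - (F p0 + t * F' p0 (real n / lam, 0)))"
      unfolding dv sc by (auto simp: F_def p0_def algebra_simps)
    show ?thesis unfolding eqf by (rule tay)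
  qed
  define Phi where "Phi = phi 0"
  define D where "D = (\<lambda>v. F' p0 (0, v))"
  have b: "((\<lambda>y. (0::real, y)) has_derivative (\<lambda>v. (0, v))) (at x)"
    by (auto intro!: derivative_eq_intros)
  have PhiD: "(Phi has_derivative D) (at x)"
    using has_derivative_compose[OF b d1] unfolding p0_def D_def Phi_def F_def by (simp add: o_def)
  have linD: "linear D" using PhiD has_derivative_linear by blast
  have frD: "frechet_derivative (phi 0) (at x) = D"
    using frechet_derivative_at[OF PhiD] unfolding Phi_def by simp
  have tayP: "(\<lambda>dx. Phi (x - dx *\<^sub>R u) - (Phi x - dx * D u)) \<in> O[at_right 0](\<lambda>dx. dx^2)" for u
  proof -
    have m: "F' p0 (0, - u) = - D u"
    proof -
      have "(0::real, - u) = - (0, u)" by simp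
      then show ?thesis unfolding D_def using linear_neg[OF lin0, of "(0, u)"] by metis
    qed
    have eqf: "(\<lambda>dx. Phi (x - dx *\<^sub>R u) - (Phi x - dx * D u))
        = (\<lambda>t. F (p0 + t *\<^sub>R (0, - u)) - (F p0 + t * F' p0 (0, - u)))"
      unfolding m by (auto simp: F_def p0_def Phi_def algebra_simps)
    show ?thesis unfolding eqf by (rule tay)
  qed
  define G where "G = (\<lambda>i j. Gop q c M Minv i j (phi 0) x)"
  have GG: "G = (\<lambda>i j. \<Sum>k=1..q. M i k * Minv k j * D (realv (c k)))"
    unfolding G_def Gop_def frD ..
  have 1: "(1::nat) \<in> {1..q}" using q by simp
  note mi = main_ind[OF inv1 linD tayP GG, where s=s and eps=eps and n=n and w=w]
  have m1: "(\<lambda>dx. (lbm_step q c M Minv s eps dx ^^ n) (\<lambda>i y. w i * Phi y) 1 (x - dx *\<^sub>R 0)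
     - (aseq q s eps w n 1 * Phi x - dx * (aseq q s eps w n 1 * D 0 + gseq q s eps w G n 1)))
     \<in> O[at_right 0](\<lambda>dx. dx^2)"
    using mi 1 by blast
  have a1': "aseq q s eps w n 1 = w 1" by (rule a1[where q=q and eps=eps, OF q eps1])
  have D0: "D 0 = 0" using linD by (rule linear_0)
  have gc: "gseq q s eps w G n 1 = real n * G 1 1 * w 1 + real n * (\<Sum>r=2..q. G 1 r * w r)
          + (\<Sum>r=2..q. G 1 r * (eps r * w 1 - w r) * (\<Sum>b=1..n. pi_poly b (s r)))"
    by (rule gclosed[where q=q and eps=eps, OF q eps1])
  have pr: "(\<Sum>l=0..n-1. pi_poly (n - l) (s r)) = (\<Sum>b=1..n. pi_poly b (s r))" for r
    using n by (rule pi_reindex)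
  have nz: "real n \<noteq> 0" using n by simp
  have eqf: "(\<lambda>dx. starting_scheme q c M Minv s eps w n dx (phi 0) x
              - (w 1 * phi 0 x
                 - real n * dx *
                   (Gop q c M Minv 1 1 (phi 0) x * w 1
                    + (\<Sum>r=2..q. Gop q c M Minv 1 r (phi 0) x * w r)
                    + 1 / real n * (\<Sum>r=2..q. Gop q c M Minv 1 r (phi 0) x * (eps r * w 1 - w r)
                                        * (\<Sum>l=0..n-1. pi_poly (n - l) (s r))))))
     = (\<lambda>dx. (lbm_step q c M Minv s eps dx ^^ n) (\<lambda>i y. w i * Phi y) 1 (x - dx *\<^sub>R 0)
     - (aseq q s eps w n 1 * Phi x - dx * (aseq q s eps w n 1 * D 0 + gseq q s eps w G n 1)))"
  proof
    fix dx :: real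
    have "real n * dx * (G 1 1 * w 1 + (\<Sum>r=2..q. G 1 r * w r)
                    + 1 / real n * (\<Sum>r=2..q. G 1 r * (eps r * w 1 - w r) * (\<Sum>b=1..n. pi_poly b (s r))))
        = dx * gseq q s eps w G n 1"
      unfolding gc using nz by (simp add: field_simps)
    then show "starting_scheme q c M Minv s eps w n dx (phi 0) x
              - (w 1 * phi 0 x
                 - real n * dx *
                   (Gop q c M Minv 1 1 (phi 0) x * w 1
                    + (\<Sum>r=2..q. Gop q c M Minv 1 r (phi 0) x * w r)
                    + 1 / real n * (\<Sum>r=2..q. Gop q c M Minv 1 r (phi 0) x * (eps r * w 1 - w r)
                                        * (\<Sum>l=0..n-1. pi_poly (n - l) (s r)))))
     = (lbm_step q c M Minv s eps dx ^^ n) (\<lambda>i y. w i * Phi y) 1 (x - dx *\<^sub>R 0)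
     - (aseq q s eps w n 1 * Phi x - dx * (aseq q s eps w n 1 * D 0 + gseq q s eps w G n 1))"
      unfolding starting_scheme_def pr a1' D0 G_def Phi_def by simp
  qed
  show ?thesis using part1 m1 unfolding eqf by blast
qed

end
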